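(* Let $D\ge3$ be an integer, $k\in\{1,0,-1\}$, $\Omega_{k,D-1}>0$, $\alpha^2=\frac{2(D-2)}{D-1}$, and fix temperatures $0<T_{\rm c}<T_{\rm h}$ and volumes $0<V_1<V_2$. Set $T_1\equiv T_{\rm c}$, $T_2\equiv T_{\rm h}$ and, for $i,j\in\{1,2\}$ and electric potential $\tilde\Phi>0$, $$\xi_{ij}=\frac{1}{2^{D-1}}\left[1+\sqrt{1+D(D-2)\left(\frac{\alpha^2\tilde\Phi^2}{4\pi^2T_i^2}-\frac{k}{4\pi^2T_i^2}\left(\frac{\Omega_{k,D-1}}{V_j}\right)^{\frac{2}{D-1}}\right)}\right]^{D-1},$$ $$\chi_{ij}=\xi_{ij}^{\frac{D-2}{D-1}}\left[\xi_{ij}^{\frac{2}{D-1}}+\frac{D^2}{16\pi^2T_i^2}\left(k\left(\frac{\Omega_{k,D-1}}{V_j}\right)^{\frac{2}{D-1}}-\alpha^2\tilde\Phi^2\right)\right].$$ Define $$\eta_{\rm non\text{-}regen}(\tilde\Phi)=1-\frac{T_{\rm c}^D(V_2\xi_{12}-V_1\xi_{11})+\frac{D-1}{D}V_2(T_{\rm h}^D\chi_{22}-T_{\rm c}^D\chi_{12})}{T_{\rm h}^D(V_2\xi_{22}-V_1\xi_{21})+\frac{D-1}{D}V_1(T_{\rm h}^D\chi_{21}-T_{\rm c}^D\chi_{11})},$$ $$\eta_{\rm regen}(\tilde\Phi)=1-\frac{T_{\rm c}^D(V_2\xi_{12}-V_1\xi_{11})+\frac{D-1}{D}\left[V_2(T_{\rm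 h}^D\chi_{22}-T_{\rm c}^D\chi_{12})-V_1(T_{\rm h}^D\chi_{21}-T_{\rm c}^D\chi_{11})\right]}{T_{\rm h}^D(V_2\xi_{22}-V_1\xi_{21})}.$$ Then, as $\tilde\Phi\to\infty$ (with $T_{\rm c},T_{\rm h},V_1,V_2$ fixed), both $\eta_{\rm non\text{-}regen}(\tilde\Phi)=1-\frac{T_{\rm c}}{T_{\rm h}}+\mathcal{O}(\tilde\Phi^{-1})$ and $\eta_{\rm regen}(\tilde\Phi)=1-\frac{T_{\rm c}}{T_{\rm h}}+\mathcal{O}(\tilde\Phi^{-1})$; in particular both tend to the Carnot efficiency $1-T_{\rm c}/T_{\rm h}$.
   Context: These are the Stirling efficiencies (without and with an ideal regenerator) of a thermal state of a $D$-dimensional holographic CFT on a constant-curvature spatial manifold of volume $V=\Omega_{k,D-1}R^{D-1}$ in the grand canonical (fixed electric potential $\tilde\Phi$) ensemble, dual to a $(D+1)$-dimensional AdS-Reissner-Nordström black hole (large, positive heat capacity branch); $k=1,0,-1$ labels spherical, planar, hyperbolic geometry. The cycle has hot isotherm at $T_{\rm h}$, cold isotherm at $T_{\rm c}$, and isochores at volumes $V_1<V_2$, with $\tilde\Phi$ held fixed throughout. *)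

theory Defs
  imports "HOL-Analysis.Analysis" "HOL-Library.Landau_Symbols"
begin

definition alpha2 :: "nat \<Rightarrow> real" where
  "alpha2 D = 2 * (real D - 2) / (real D - 1)"

definition xi :: "nat \<Rightarrow> real \<Rightarrow> real \<Rightarrow> real \<Rightarrow> real \<Rightarrow> real \<Rightarrow> real" where
  "xi D k Om T V Phi =
     (1 / 2 ^ (D - 1)) *
     (1 + sqrt (1 + real D * (real D - 2) *
        (alpha2 D * Phi\<^sup>2 / (4 * pi\<^sup>2 * T\<^sup>2)
         - k / (4 * pi\<^sup>2 * T\<^sup>2) * (Om / V) powr (2 / (real D - 1))))) ^ (D - 1)"

definition chi :: "nat \<Rightarrow> real \<Rightarrow> real \<Rightarrow> real \<Rightarrow> real \<Rightarrow> real \<Rightarrow> real" where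
  "chi D k Om T V Phi =
     (xi D k Om T V Phi) powr ((real D - 2) / (real D - 1)) *
     ((xi D k Om T V Phi) powr (2 / (real D - 1))
      + (real D)\<^sup>2 / (16 * pi\<^sup>2 * T\<^sup>2) *
        (k * (Om / V) powr (2 / (real D - 1)) - alpha2 D * Phi\<^sup>2))"

definition eta_nonregen ::
  "nat \<Rightarrow> real \<Rightarrow> real \<Rightarrow> real \<Rightarrow> real \<Rightarrow> real \<Rightarrow> real \<Rightarrow> real \<Rightarrow> real" where
  "eta_nonregen D k Om Tc Th V1 V2 Phi =
     (let x11 = xi D k Om Tc V1 Phi; x12 = xi D k Om Tc V2 Phi;
          x21 = xi D k Om Th V1 Phi; x22 = xi D k Om Th V2 Phi;
          c11 = chi D k Om Tc V1 Phi; c12 = chi D k Om Tc V2 Phi;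
          c21 = chi D k Om Th V1 Phi; c22 = chi D k Om Th V2 Phi
      in 1 - (Tc ^ D * (V2 * x12 - V1 * x11)
               + (real D - 1) / real D * V2 * (Th ^ D * c22 - Tc ^ D * c12))
            / (Th ^ D * (V2 * x22 - V1 * x21)
               + (real D - 1) / real D * V1 * (Th ^ D * c21 - Tc ^ D * c11)))"

definition eta_regen ::
  "nat \<Rightarrow> real \<Rightarrow> real \<Rightarrow> real \<Rightarrow> real \<Rightarrow> real \<Rightarrow> real \<Rightarrow> real \<Rightarrow> real" where
  "eta_regen D k Om Tc Th V1 V2 Phi =
     (let x11 = xi D k Om Tc V1 Phi; x12 = xi D k Om Tc V2 Phi;
          x21 = xi D k Om Th V1 Phi; x22 = xi D k Om Th V2 Phi;
          c11 = chi D k Om Tc V1 Phi; c12 = chi D k Om Tc V2 Phi;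
          c21 = chi D k Om Th V1 Phi; c22 = chi D k Om Th V2 Phi
      in 1 - (Tc ^ D * (V2 * x12 - V1 * x11)
               + (real D - 1) / real D *
                 (V2 * (Th ^ D * c22 - Tc ^ D * c12) - V1 * (Th ^ D * c21 - Tc ^ D * c11)))
            / (Th ^ D * (V2 * x22 - V1 * x21)))"

end

theory Submission
  imports Defs
begin

lemma binom_rem:
  fixes H :: real assumes H: "H \<ge> 0"
  shows "\<exists>C\<ge>0. \<forall>y h. y \<ge> 1 \<longrightarrow> \<bar>h\<bar> \<le> H \<longrightarrow>
     \<bar>(y+h)^(m+2) - y^(m+2) - real (m+2) * h * y^(m+1)\<bar> \<le> C * y^m"
proof (induction m)
  case 0
  show ?case
  proof (intro exI[of _ "H^2"] conjI allI impI)
    fix y h :: real assume "y \<ge> 1" "\<bar>h\<bar> \<le> H"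
    have "\<bar>(y+h)^(0+2) - y^(0+2) - real (0+2) * h * y^(0+1)\<bar> = h^2"
      by (simp add: power2_eq_square algebra_simps)
    also have "\<dots> \<le> H^2" using \<open>\<bar>h\<bar> \<le> H\<close>
      by (metis abs_ge_zero power2_abs power_mono)
    finally show "\<bar>(y+h)^(0+2) - y^(0+2) - real (0+2) * h * y^(0+1)\<bar> \<le> H^2 * y^0" by simp
  qed (simp)
next
  case (Suc m)
  then obtain C where C0: "C \<ge> 0" and C: "\<And>y h. y \<ge> 1 \<Longrightarrow> \<bar>h\<bar> \<le> H \<Longrightarrow>
     \<bar>(y+h)^(m+2) - y^(m+2) - real (m+2) * h * y^(m+1)\<bar> \<le> C * y^m" by blast
  show ?case
  proof (intro exI[of _ "real (m+2) * H^2 + C * (1 + H)"] conjI allI impI)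
    show "0 \<le> real (m+2) * H^2 + C * (1 + H)" using C0 H by simp
    fix y h :: real assume y: "y \<ge> 1" and h: "\<bar>h\<bar> \<le> H"
    define E where "E = (y+h)^(m+2) - y^(m+2) - real (m+2) * h * y^(m+1)"
    have E: "\<bar>E\<bar> \<le> C * y^m" using C[OF y h] by (simp add: E_def)
    have eq: "(y+h)^(Suc m+2) - y^(Suc m+2) - real (Suc m+2) * h * y^(Suc m+1)
        = real (m+2) * h^2 * y^(m+1) + (y+h) * E"
      by (simp add: E_def power2_eq_square algebra_simps)
    have ym: "y^m \<le> y^(m+1)" using y by (simp add: power_increasing)
    have y0: "0 \<le> y^m" using y by simp
    have h2: "h^2 \<le> H^2" using h by (metis abs_ge_zero power2_abs power_mono)
    have "\<bar>real (m+2) * h^2 * y^(m+1)\<bar> \<le> real (m+2) * H^2 * y^(m+1)"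
      using h2 y by (simp add: abs_mult mult_right_mono)
    moreover have "\<bar>(y+h) * E\<bar> \<le> C * (1 + H) * y^(m+1)"
    proof -
      have "\<bar>(y+h) * E\<bar> \<le> (y + H) * (C * y^m)"
        unfolding abs_mult by (rule mult_mono) (use h y E in auto)
      also have "\<dots> = C * (y * y^m) + C * H * y^m" by (simp add: algebra_simps)
      also have "\<dots> \<le> C * y^(m+1) + C * H * y^(m+1)"
        using ym C0 H by (intro add_mono mult_left_mono) (auto simp: mult_nonneg_nonneg)
      finally show ?thesis by (simp add: algebra_simps)
    qed
    ultimately show "\<bar>(y+h)^(Suc m+2) - y^(Suc m+2) - real (Suc m+2) * h * y^(Suc m+1)\<bar>
       \<le> (real (m+2) * H^2 + C * (1 + H)) * y^(Suc m)"
      unfolding eq by (simp add: algebra_simps)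
  qed
qed

lemma sqrt_diff_bound:
  fixes A c x :: real assumes A: "A > 0" and x: "x > 0" and nn: "A*x^2 + c \<ge> 0"
  shows "\<bar>sqrt (A*x^2+c) - sqrt A * x\<bar> \<le> \<bar>c\<bar> / (sqrt A * x)"
proof -
  define s where "s = sqrt (A*x^2+c)"
  define t where "t = sqrt A * x"
  have t0: "t > 0" using A x by (simp add: t_def)
  have s0: "s \<ge> 0" using nn by (simp add: s_def)
  have s2: "s^2 = A*x^2+c" using nn by (simp add: s_def)
  have t2: "t^2 = A*x^2" using A by (simp add: t_def power_mult_distrib)
  have "(s - t) * (s + t) = c" using s2 t2 by (simp add: algebra_simps power2_eq_square)
  hence "\<bar>s - t\<bar> * (s + t) = \<bar>c\<bar>" using s0 t0 by (metis abs_mult abs_of_pos add_nonneg_pos)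
  hence "\<bar>s - t\<bar> = \<bar>c\<bar> / (s + t)" using s0 t0 by (simp add: field_simps)
  also have "\<dots> \<le> \<bar>c\<bar> / t" using s0 t0 by (intro divide_left_mono) auto
  finally show ?thesis by (simp add: s_def t_def)
qed

lemma alg: "h = T/2 + e \<Longrightarrow> M*T*P - 2*((y+h)*P) + 2*(y*(y*Q)) = M*T*(P - y*Q - (M-1)*h*Q)
   + M*T*(M-1)*(h*Q) - 2*((y+h)*P - y*(y*Q) - M*h*(y*Q)) - 2*M*(e*(y*Q))" for h T e M P y Q :: real
  by hypsubst (simp add: field_simps)

lemma core:
  fixes A T c :: real and m :: nat
  assumes A: "A > 0" and T: "T > 0"
  shows "\<exists>C x0. x0 > 0 \<and> (\<forall>x \<ge> x0. A*x^2 + c \<ge> 0 \<and>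
     \<bar>((T + sqrt(A*x^2+c))/2)^(m+2) - (sqrt A/2*x)^(m+2)\<bar> \<le> C*(sqrt A/2*x)^(m+1) \<and>
     \<bar>real (m+3) * T * ((T + sqrt(A*x^2+c))/2)^(m+2) - 2*((T + sqrt(A*x^2+c))/2)^(m+3)
        + 2*(sqrt A/2*x)^(m+3)\<bar> \<le> C*(sqrt A/2*x)^(m+1))"
proof -
  define H where "H = T/2 + \<bar>c\<bar>/(2* sqrt A)"
  have sA: "sqrt A > 0" using A by simp
  have H0: "H \<ge> 0" using T sA by (simp add: H_def)
  obtain Cn where Cn0: "Cn \<ge> 0" and Cn: "\<And>y h. y \<ge> 1 \<Longrightarrow> \<bar>h\<bar> \<le> H \<Longrightarrow>
     \<bar>(y+h)^(m+2) - y^(m+2) - real (m+2) * h * y^(m+1)\<bar> \<le> Cn * y^m"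
    using binom_rem[OF H0, of m] by blast
  obtain CD where CD0: "CD \<ge> 0" and CD: "\<And>y h. y \<ge> 1 \<Longrightarrow> \<bar>h\<bar> \<le> H \<Longrightarrow>
     \<bar>(y+h)^(Suc m+2) - y^(Suc m+2) - real (Suc m+2) * h * y^(Suc m+1)\<bar> \<le> CD * y^(Suc m)"
    using binom_rem[OF H0, of "Suc m"] by blast
  define C where "C = real (m+2) * H + Cn + real (m+3) * T * Cn + real (m+3) * T * real (m+2) * H
     + 2 * CD + 2 * real (m+3) * (\<bar>c\<bar> / 4)"
  define x0 where "x0 = 1 + 2 / sqrt A + sqrt (\<bar>c\<bar> / A)"
  show ?thesis
  proof (rule exI[of _ C], rule exI[of _ x0], rule conjI)
    show "x0 > 0" using sA by (simp add: x0_def add_pos_nonneg)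
  next
   show "\<forall>x \<ge> x0. A*x^2 + c \<ge> 0 \<and>
     \<bar>((T + sqrt(A*x^2+c))/2)^(m+2) - (sqrt A/2*x)^(m+2)\<bar> \<le> C*(sqrt A/2*x)^(m+1) \<and>
     \<bar>real (m+3) * T * ((T + sqrt(A*x^2+c))/2)^(m+2) - 2*((T + sqrt(A*x^2+c))/2)^(m+3)
        + 2*(sqrt A/2*x)^(m+3)\<bar> \<le> C*(sqrt A/2*x)^(m+1)"
   proof (intro allI impI conjI)
    fix x assume x: "x \<ge> x0"
    have p1: "2 / sqrt A \<ge> 0" using sA by simp
    have p2: "sqrt (\<bar>c\<bar> / A) \<ge> 0" using A by simp
    have x1: "x \<ge> 1" using x p1 p2 unfolding x0_def by linarith
    have xc: "x \<ge> sqrt (\<bar>c\<bar> / A)" using x p1 p2 unfolding x0_def by linarith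
    have "\<bar>c\<bar> / A \<le> x^2" using real_sqrt_le_iff[of "\<bar>c\<bar> / A" "x^2"] xc x1 by simp
    hence "\<bar>c\<bar> \<le> A * x^2" using A by (simp add: field_simps)
    thus nn: "A*x^2 + c \<ge> 0" by linarith
    define y where "y = sqrt A / 2 * x"
    have "2 / sqrt A \<le> x" using x p1 p2 unfolding x0_def by linarith
    hence y1: "y \<ge> 1" using sA by (simp add: y_def field_simps)
    have Cexp: "C * y^(m+1) = real (m+2) * (H * y^(m+1)) + Cn * y^(m+1) + real (m+3) * T * (Cn * y^(m+1))
       + real (m+3) * T * real (m+2) * (H * y^(m+1)) + 2 * (CD * y^(m+1)) + 2 * real (m+3) * (\<bar>c\<bar> / 4 * y^(m+1))"
      unfolding C_def by (simp only: distrib_right mult.assoc)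
    define e where "e = (sqrt (A*x^2+c) - sqrt A * x) / 2"
    have ebound: "\<bar>e\<bar> \<le> \<bar>c\<bar> / (2 * sqrt A * x)"
      using sqrt_diff_bound[OF A _ nn] x1 by (simp add: e_def)
    have ey: "\<bar>e\<bar> * y \<le> \<bar>c\<bar> / 4"
    proof -
      have "\<bar>e\<bar> * y \<le> \<bar>c\<bar> / (2 * sqrt A * x) * y" by (rule mult_right_mono) (use ebound y1 in auto)
      also have "\<dots> = \<bar>c\<bar> / 4" using sA x1 by (simp add: y_def field_simps)
      finally show ?thesis .
    qed
    have e1: "\<bar>e\<bar> \<le> \<bar>c\<bar> / (2 * sqrt A)"
    proof -
      have "\<bar>c\<bar> / (2 * sqrt A * x) \<le> \<bar>c\<bar> / (2 * sqrt A)" using sA x1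
        by (intro divide_left_mono) (auto simp: mult_pos_pos)
      thus ?thesis using ebound by linarith
    qed
    define h where "h = T/2 + e"
    have hH: "\<bar>h\<bar> \<le> H" using e1 T by (simp add: h_def H_def)
    have w: "(T + sqrt(A*x^2+c))/2 = y + h" by (simp add: y_def h_def e_def field_simps)
    define En where "En = (y+h)^(m+2) - y^(m+2) - real (m+2) * h * y^(m+1)"
    define ED where "ED = (y+h)^(Suc m+2) - y^(Suc m+2) - real (Suc m+2) * h * y^(Suc m+1)"
    have En: "\<bar>En\<bar> \<le> Cn * y^m" using Cn[OF y1 hH] by (simp add: En_def)
    have ED: "\<bar>ED\<bar> \<le> CD * y^(m+1)" using CD[OF y1 hH] by (simp add: ED_def)
    have ym: "y^m \<le> y^(m+1)" using y1 by (simp add: power_increasing)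
    have yp: "0 \<le> y^m" "0 \<le> y^(m+1)" using y1 by auto
    have hy: "\<bar>h * y^(m+1)\<bar> \<le> H * y^(m+1)"
      unfolding abs_mult using hH yp by (simp add: mult_right_mono del: power_Suc)
    have eyn: "\<bar>e * y^(m+2)\<bar> \<le> \<bar>c\<bar> / 4 * y^(m+1)"
    proof -
      have "\<bar>e * y^(m+2)\<bar> = (\<bar>e\<bar> * y) * y^(m+1)" using y1 by (simp add: abs_mult algebra_simps)
      also have "\<dots> \<le> \<bar>c\<bar> / 4 * y^(m+1)" by (rule mult_right_mono) (use ey yp in auto)
      finally show ?thesis .
    qed
    have CnY: "Cn * y^m \<le> Cn * y^(m+1)" using ym Cn0 by (simp add: mult_left_mono)
    have eq1: "(y+h)^(m+2) - y^(m+2) = real (m+2) * (h * y^(m+1)) + En" by (simp add: En_def)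
    have "\<bar>(y+h)^(m+2) - y^(m+2)\<bar> \<le> real (m+2) * (H * y^(m+1)) + Cn * y^(m+1)"
    proof -
      have "\<bar>real (m+2) * (h * y^(m+1))\<bar> \<le> real (m+2) * (H * y^(m+1))"
        using hy by (simp add: abs_mult mult_left_mono)
      thus ?thesis unfolding eq1 using En CnY by linarith
    qed
    also have "\<dots> \<le> C * y^(m+1)"
    proof -
      have "0 \<le> real (m+3) * T * (Cn * y^(m+1))" "0 \<le> real (m+3) * T * real (m+2) * (H * y^(m+1))"
        "0 \<le> 2 * (CD * y^(m+1))" "0 \<le> 2 * real (m+3) * (\<bar>c\<bar> / 4 * y^(m+1))"
        using Cn0 H0 CD0 T yp by simp_all
      thus ?thesis unfolding Cexp by linarith
    qed
    finally show "\<bar>((T + sqrt(A*x^2+c))/2)^(m+2) - (sqrt A/2*x)^(m+2)\<bar> \<le> C*(sqrt A/2*x)^(m+1)"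
      unfolding w by (simp add: y_def)
    have eq2: "real (m+3) * T * (y+h)^(m+2) - 2*(y+h)^(m+3) + 2*y^(m+3)
       = real (m+3) * T * En + real (m+3) * T * real (m+2) * (h * y^(m+1)) - 2 * ED
         - 2 * real (m+3) * (e * y^(m+2))"
    proof -
      have P: "(y+h)^(m+3) = (y+h)*(y+h)^(m+2)" "y^(m+2) = y*y^(m+1)" "y^(m+3) = y*(y*y^(m+1))"
        by (simp_all add: power_add eval_nat_numeral)
      have "real (m+3) - 1 = real (m+2)" by simp
      thus ?thesis unfolding En_def ED_def P using alg[OF h_def, of "real (m+3)" "(y+h)^(m+2)" y "y^(m+1)"]
        by (simp add: P)
    qed
    have "\<bar>real (m+3) * T * (y+h)^(m+2) - 2*(y+h)^(m+3) + 2*y^(m+3)\<bar>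
       \<le> real (m+3) * T * (Cn * y^(m+1)) + real (m+3) * T * real (m+2) * (H * y^(m+1)) + 2 * (CD * y^(m+1))
         + 2 * real (m+3) * (\<bar>c\<bar> / 4 * y^(m+1))"
    proof -
      have a: "\<bar>real (m+3) * T * En\<bar> \<le> real (m+3) * T * (Cn * y^(m+1))"
        using En CnY T by (simp add: abs_mult mult_left_mono)
      have b: "\<bar>real (m+3) * T * real (m+2) * (h * y^(m+1))\<bar> \<le> real (m+3) * T * real (m+2) * (H * y^(m+1))"
        using hy T by (simp add: abs_mult mult_left_mono)
      have c: "\<bar>2 * ED\<bar> \<le> 2 * (CD * y^(m+1))" using ED by simp
      have d: "\<bar>2 * real (m+3) * (e * y^(m+2))\<bar> \<le> 2 * real (m+3) * (\<bar>c\<bar> / 4 * y^(m+1))"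
        using eyn by (simp add: abs_mult mult_left_mono)
      show ?thesis unfolding eq2 using a b c d by linarith
    qed
    also have "\<dots> \<le> C * y^(m+1)"
    proof -
      have "0 \<le> real (m+2) * (H * y^(m+1))" "0 \<le> Cn * y^(m+1)" using Cn0 H0 yp by simp_all
      thus ?thesis unfolding Cexp by linarith
    qed
    finally show "\<bar>real (m+3) * T * ((T + sqrt(A*x^2+c))/2)^(m+2) - 2*((T + sqrt(A*x^2+c))/2)^(m+3)
        + 2*(sqrt A/2*x)^(m+3)\<bar> \<le> C*(sqrt A/2*x)^(m+1)"
      unfolding w by (simp add: y_def)
   qed
  qed
qed


lemma ident:
  fixes m :: nat and k Om T V x A B :: real
  assumes T: "T > 0"
    and A_def: "A = real (m+3) * (real (m+3) - 2) * alpha2 (m+3) / (4 * pi^2)"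
    and B_def: "B = real (m+3) * (real (m+3) - 2) * k * (Om/V) powr (2 / (real (m+3) - 1)) / (4 * pi^2)"
    and nn: "A * x^2 + (T^2 - B) \<ge> 0"
  shows "T^(m+3) * xi (m+3) k Om T V x = T * ((T + sqrt (A * x^2 + (T^2 - B)))/2)^(m+2)"
    and "T^(m+3) * chi (m+3) k Om T V x = (real (m+3) * T * ((T + sqrt (A * x^2 + (T^2 - B)))/2)^(m+2)
          - 2 * ((T + sqrt (A * x^2 + (T^2 - B)))/2)^(m+3)) / real (m+1)"
proof -
  define S where "S = sqrt (A * x^2 + (T^2 - B))"
  define w where "w = (T + S) / 2"
  define P where "P = (Om/V) powr (2 / (real (m+3) - 1))"
  define a where "a = alpha2 (m+3)"
  have S0: "S \<ge> 0" using nn by (simp add: S_def)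
  have S2: "S^2 = A * x^2 + (T^2 - B)" using nn by (simp add: S_def)
  have w0: "w > 0" using S0 T by (simp add: w_def)
  have pi0: "pi^2 > 0" by simp
  have arg: "1 + real (m+3) * (real (m+3) - 2) *
        (a * x\<^sup>2 / (4 * pi\<^sup>2 * T\<^sup>2) - k / (4 * pi\<^sup>2 * T\<^sup>2) * P) = (S/T)^2"
    using T pi0 unfolding S2 power_divide A_def B_def a_def P_def
    by (simp add: field_simps)
  have sq: "sqrt ((S/T)^2) = S/T" using S0 T by simp
  have xi_eq: "xi (m+3) k Om T V x = (w/T)^(m+2)"
  proof -
    have "xi (m+3) k Om T V x = (1 / 2^(m+2)) * (1 + S/T)^(m+2)"
      unfolding xi_def using arg sq by (simp add: a_def P_def)
    also have "\<dots> = ((1 + S/T)/2)^(m+2)" by (simp add: power_divide)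
    also have "(1 + S/T)/2 = w/T" using T by (simp add: w_def field_simps)
    finally show ?thesis .
  qed
  show "T^(m+3) * xi (m+3) k Om T V x = T * ((T + sqrt (A * x^2 + (T^2 - B)))/2)^(m+2)"
  proof -
    have "T^(m+3) * xi (m+3) k Om T V x = T * w^(m+2)"
      unfolding xi_eq using T by (simp add: power_divide eval_nat_numeral)
    thus ?thesis by (simp add: w_def S_def)
  qed
  define u where "u = w/T"
  have u0: "u > 0" using w0 T by (simp add: u_def)
  have p1: "(xi (m+3) k Om T V x) powr ((real (m+3) - 2) / (real (m+3) - 1)) = u^(m+1)"
  proof -
    have "(xi (m+3) k Om T V x) powr ((real (m+3) - 2) / (real (m+3) - 1)) = (u powr real (m+2)) powr (real (m+1) / real (m+2))"
    proof -
      have pw: "u^(m+2) = u powr real (m+2)" using powr_realpow[OF u0, of "m+2"] by simp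
      have ex: "(real (m+3) - 2) / (real (m+3) - 1) = real (m+1) / real (m+2)" by simp
      show ?thesis by (simp only: xi_eq u_def[symmetric] ex pw)
    qed
    also have "\<dots> = u powr real (m+1)" by (simp add: powr_powr)
    finally show ?thesis using powr_realpow[OF u0, of "m+1"] by simp
  qed
  have p2: "(xi (m+3) k Om T V x) powr (2 / (real (m+3) - 1)) = u^2"
  proof -
    have "(xi (m+3) k Om T V x) powr (2 / (real (m+3) - 1)) = (u powr real (m+2)) powr (2 / real (m+2))"
    proof -
      have pw: "u^(m+2) = u powr real (m+2)" using powr_realpow[OF u0, of "m+2"] by simp
      have ex: "2 / (real (m+3) - 1) = 2 / real (m+2)" by simp
      show ?thesis by (simp only: xi_eq u_def[symmetric] ex pw)
    qed
    also have "\<dots> = u powr 2"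
    proof -
      have "real (m+2) * (2 / real (m+2)) = 2" by (simp add: field_simps)
      thus ?thesis by (simp only: powr_powr)
    qed
    finally show ?thesis using powr_realpow[OF u0, of 2] by simp
  qed
  have trm: "(real (m+3))\<^sup>2 / (16 * pi\<^sup>2 * T\<^sup>2) * (k * P - a * x\<^sup>2)
      = - (real (m+3) * (S^2 - T^2) / (4 * real (m+1) * T^2))"
  proof -
    have d: "S^2 - T^2 = real (m+3) * real (m+1) * (a * x^2 - k * P) / (4 * pi^2)"
      unfolding S2 A_def B_def a_def P_def by (simp add: field_simps)
    have nz: "pi \<noteq> 0" "T \<noteq> 0" "real m + 1 \<noteq> 0" "1 + real m \<noteq> 0" "real m + 3 \<noteq> 0" "3 + real m \<noteq> 0" using T by auto
    have g: "\<And>Dd r p TT Z :: real. r \<noteq> 0 \<Longrightarrow> p \<noteq> 0 \<Longrightarrow> TT \<noteq> 0 \<Longrightarrow>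
       Dd^2 / (16 * p^2 * TT^2) * (- Z) = - (Dd * (Dd * r * Z / (4 * p^2)) / (4 * r * TT^2))"
      by (simp add: field_simps power2_eq_square)
    have "k * P - a * x^2 = - (a * x^2 - k * P)" by simp
    thus ?thesis unfolding d using g[of "real (m+1)" pi T "real (m+3)" "a * x^2 - k * P"] nz
      by (simp only: of_nat_eq_0_iff) simp
  qed
  have chi_eq: "chi (m+3) k Om T V x = u^(m+1) * (u^2 - real (m+3) * (S^2 - T^2) / (4 * real (m+1) * T^2))"
    unfolding chi_def p1 p2 trm[unfolded a_def P_def] by simp
  have Sw: "S = 2*w - T" by (simp add: w_def field_simps)
  have "T^(m+3) * chi (m+3) k Om T V x = (real (m+3) * T * w^(m+2) - 2 * w^(m+3)) / real (m+1)"
  proof -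
    have e1: "T^(m+3) * u^(m+1) = T^2 * w^(m+1)" using T
      by (simp add: u_def power_divide eval_nat_numeral field_simps)
    have e2: "w^(m+2) = w * w^(m+1)" "w^(m+3) = w*w*w^(m+1)" by (simp_all add: eval_nat_numeral)
    have "T^(m+3) * chi (m+3) k Om T V x = T^2 * w^(m+1) * (u^2 - real (m+3) * (S^2 - T^2) / (4 * real (m+1) * T^2))"
      unfolding chi_eq e1[symmetric] by (simp add: mult.assoc)
    also have "\<dots> = (real (m+3) * T * w^(m+2) - 2 * w^(m+3)) / real (m+1)"
    proof -
      have g2: "\<And>r Dd W :: real. r \<noteq> 0 \<Longrightarrow> Dd = r + 2 \<Longrightarrow>
        T^2 * W * ((w/T)^2 - Dd * ((2*w - T)^2 - T^2) / (4 * r * T^2)) = (Dd * T * (w * W) - 2 * (w * w * W)) / r"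
        using T by (simp add: field_simps power2_eq_square)
      show ?thesis unfolding e2 Sw u_def using g2[of "real (m+1)" "real (m+3)" "w^(m+1)"] by simp
    qed
    finally show ?thesis .
  qed
  thus "T^(m+3) * chi (m+3) k Om T V x = (real (m+3) * T * ((T + sqrt (A * x^2 + (T^2 - B)))/2)^(m+2)
          - 2 * ((T + sqrt (A * x^2 + (T^2 - B)))/2)^(m+3)) / real (m+1)"
    by (simp add: w_def S_def)
qed


lemma ratio:
  fixes a b K Y E y Nn M :: real
  assumes a: "a > 0" and b: "b > 0" and K: "K > 0" and Y: "Y > 0" and E: "E \<ge> 0"
    and y: "y \<ge> 2*E/(b*K)" and y0: "y > 0"
    and N: "\<bar>Nn - a*K*y*Y\<bar> \<le> E*Y" and M: "\<bar>M - b*K*y*Y\<bar> \<le> E*Y"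
  shows "\<bar>(1 - Nn/M) - (1 - a/b)\<bar> \<le> (2*(a+b)*E/(b^2*K)) / y"
proof -
  have "E \<le> b*K*y/2" using y b K by (simp add: field_simps)
  hence "E*Y \<le> b*K*y*Y/2" using Y by (metis mult_right_mono less_imp_le times_divide_eq_left)
  hence Mlow: "M \<ge> b*K*y*Y/2" using M by linarith
  have bKyY: "b*K*y*Y > 0" using b K y0 Y by simp
  hence M0: "M > 0" using Mlow by linarith
  have eq: "(1 - Nn/M) - (1 - a/b) = (a*M - b*Nn)/(b*M)" using M0 b by (simp add: field_simps)
  have num: "\<bar>a*M - b*Nn\<bar> \<le> (a+b)*E*Y"
  proof -
    have "a*M - b*Nn = a*(M - b*K*y*Y) - b*(Nn - a*K*y*Y)" by (simp add: algebra_simps)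
    hence "\<bar>a*M - b*Nn\<bar> \<le> a*\<bar>M - b*K*y*Y\<bar> + b*\<bar>Nn - a*K*y*Y\<bar>"
      using abs_triangle_ineq4[of "a*(M - b*K*y*Y)" "b*(Nn - a*K*y*Y)"] a b by (simp add: abs_mult)
    also have "\<dots> \<le> a*(E*Y) + b*(E*Y)" using a b N M by (intro add_mono mult_left_mono) auto
    finally show ?thesis by (simp add: algebra_simps)
  qed
  have "\<bar>(a*M - b*Nn)/(b*M)\<bar> = \<bar>a*M - b*Nn\<bar>/(b*M)" using b M0 by simp
  also have "\<dots> \<le> (a+b)*E*Y/(b*(b*K*y*Y/2))"
    using num Mlow b M0 bKyY a E Y by (intro frac_le mult_left_mono mult_pos_pos) auto
  also have "\<dots> = (2*(a+b)*E/(b^2*K)) / y" using b K y0 Y by (simp add: field_simps power2_eq_square)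
  finally show ?thesis unfolding eq .
qed


lemma lin_bound:
  fixes pa pb y Y C T Va Vb :: real
  assumes "\<bar>pa - y*Y\<bar> \<le> C*Y" "\<bar>pb - y*Y\<bar> \<le> C*Y" "T > 0" "Va > 0" "Vb > 0"
  shows "\<bar>T*(Vb*pb - Va*pa) - T*(Vb-Va)*y*Y\<bar> \<le> T*(Va+Vb)*C*Y"
proof -
  have "T*(Vb*pb - Va*pa) - T*(Vb-Va)*y*Y = T*(Vb*(pb - y*Y) - Va*(pa - y*Y))" by (simp add: algebra_simps)
  moreover have "\<bar>Vb*(pb - y*Y) - Va*(pa - y*Y)\<bar> \<le> Vb*\<bar>pb - y*Y\<bar> + Va*\<bar>pa - y*Y\<bar>"
    using abs_triangle_ineq4[of "Vb*(pb - y*Y)" "Va*(pa - y*Y)"] assms by (simp add: abs_mult)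
  ultimately have "\<bar>T*(Vb*pb - Va*pa) - T*(Vb-Va)*y*Y\<bar> \<le> T*(Vb*\<bar>pb - y*Y\<bar> + Va*\<bar>pa - y*Y\<bar>)"
    using assms by (simp add: abs_mult mult_left_mono)
  also have "\<dots> \<le> T*(Vb*(C*Y) + Va*(C*Y))"
    using assms by (intro mult_left_mono add_mono) auto
  finally show ?thesis by (simp add: algebra_simps)
qed

lemma fX_bound:
  fixes f V Xd C Y :: real
  assumes "0 \<le> f" "f \<le> 1" "V > 0" "\<bar>Xd\<bar> \<le> 2*C*Y"
  shows "\<bar>f*V*Xd\<bar> \<le> 2*V*C*Y"
proof -
  have "\<bar>f*V*Xd\<bar> = f*(V*\<bar>Xd\<bar>)" using assms by (simp add: abs_mult)
  also have "\<dots> \<le> 1*(V*\<bar>Xd\<bar>)" using assms by (intro mult_right_mono) auto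
  also have "\<dots> \<le> V*(2*C*Y)" using assms by simp
  finally show ?thesis by simp
qed

lemma q_bound:
  fixes q1 q2 Z C Y :: real and m :: nat
  assumes "\<bar>q1 + 2*Z\<bar> \<le> C*Y" "\<bar>q2 + 2*Z\<bar> \<le> C*Y"
  shows "\<bar>q2 / real (m+1) - q1 / real (m+1)\<bar> \<le> 2*C*Y"
proof -
  have "\<bar>q2 / real (m+1) - q1 / real (m+1)\<bar> = \<bar>q2 - q1\<bar> / real (m+1)" by (simp add: diff_divide_distrib[symmetric])
  also have "\<dots> \<le> \<bar>q2 - q1\<bar>"
    using mult_left_mono[of 1 "1 + real m" "\<bar>q2 - q1\<bar>"] by (simp add: divide_le_eq)
  also have "\<dots> \<le> 2*C*Y" using assms by linarith
  finally show ?thesis .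
qed
theorem mainTheorem3:
  fixes D :: nat and k Om Tc Th V1 V2 :: real
  assumes "D \<ge> 3" and "k \<in> {1, 0, -1}" and "Om > 0"
    and "0 < Tc" and "Tc < Th" and "0 < V1" and "V1 < V2"
  shows "(\<lambda>Phi. eta_nonregen D k Om Tc Th V1 V2 Phi - (1 - Tc / Th)) \<in> O[at_top](\<lambda>Phi. 1 / Phi)
     \<and> (\<lambda>Phi. eta_regen D k Om Tc Th V1 V2 Phi - (1 - Tc / Th)) \<in> O[at_top](\<lambda>Phi. 1 / Phi)
     \<and> ((\<lambda>Phi. eta_nonregen D k Om Tc Th V1 V2 Phi) \<longlongrightarrow> 1 - Tc / Th) at_top
     \<and> ((\<lambda>Phi. eta_regen D k Om Tc Th V1 V2 Phi) \<longlongrightarrow> 1 - Tc / Th) at_top"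
proof -
  have Tc0: "Tc > 0" and Th0: "Th > 0" and V10: "V1 > 0" and K0: "V2 - V1 > 0"
    using assms by auto
  obtain m where D: "D = m+3" using assms(1) by (metis add.commute le_Suc_ex)
  define A where "A = real (m+3) * (real (m+3) - 2) * alpha2 (m+3) / (4 * pi^2)"
  define B where "B V = real (m+3) * (real (m+3) - 2) * k * (Om/V) powr (2 / (real (m+3) - 1)) / (4 * pi^2)" for V
  have A0: "A > 0" unfolding A_def alpha2_def by (auto intro!: divide_pos_pos mult_pos_pos)
  have sA: "sqrt A > 0" using A0 by simp
  define yy where "yy x = sqrt A / 2 * x" for x
  define w where "w T V x = (T + sqrt (A*x^2 + (T^2 - B V)))/2" for T V x
  have core_inst: "\<And>T V. T > 0 \<Longrightarrow> \<exists>C x0. x0 > 0 \<and> (\<forall>x\<ge>x0. A*x^2 + (T^2 - B V) \<ge> 0 \<and>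
      \<bar>(w T V x)^(m+2) - (yy x)^(m+2)\<bar> \<le> C * (yy x)^(m+1) \<and>
      \<bar>real (m+3) * T * (w T V x)^(m+2) - 2 * (w T V x)^(m+3) + 2 * (yy x)^(m+3)\<bar> \<le> C * (yy x)^(m+1))"
    unfolding w_def yy_def by (rule core[OF A0])
  obtain C11 x11 where x11: "x11 > 0" and H11: "\<And>x. x \<ge> x11 \<Longrightarrow> A*x^2 + (Tc^2 - B V1) \<ge> 0 \<and>
      \<bar>(w Tc V1 x)^(m+2) - (yy x)^(m+2)\<bar> \<le> C11 * (yy x)^(m+1) \<and>
      \<bar>real (m+3) * Tc * (w Tc V1 x)^(m+2) - 2 * (w Tc V1 x)^(m+3) + 2 * (yy x)^(m+3)\<bar> \<le> C11 * (yy x)^(m+1)"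
    using core_inst[OF Tc0, of V1] by blast
  obtain C12 x12 where x12: "x12 > 0" and H12: "\<And>x. x \<ge> x12 \<Longrightarrow> A*x^2 + (Tc^2 - B V2) \<ge> 0 \<and>
      \<bar>(w Tc V2 x)^(m+2) - (yy x)^(m+2)\<bar> \<le> C12 * (yy x)^(m+1) \<and>
      \<bar>real (m+3) * Tc * (w Tc V2 x)^(m+2) - 2 * (w Tc V2 x)^(m+3) + 2 * (yy x)^(m+3)\<bar> \<le> C12 * (yy x)^(m+1)"
    using core_inst[OF Tc0, of V2] by blast
  obtain C21 x21 where x21: "x21 > 0" and H21: "\<And>x. x \<ge> x21 \<Longrightarrow> A*x^2 + (Th^2 - B V1) \<ge> 0 \<and>
      \<bar>(w Th V1 x)^(m+2) - (yy x)^(m+2)\<bar> \<le> C21 * (yy x)^(m+1) \<and>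
      \<bar>real (m+3) * Th * (w Th V1 x)^(m+2) - 2 * (w Th V1 x)^(m+3) + 2 * (yy x)^(m+3)\<bar> \<le> C21 * (yy x)^(m+1)"
    using core_inst[OF Th0, of V1] by blast
  obtain C22 x22 where x22: "x22 > 0" and H22: "\<And>x. x \<ge> x22 \<Longrightarrow> A*x^2 + (Th^2 - B V2) \<ge> 0 \<and>
      \<bar>(w Th V2 x)^(m+2) - (yy x)^(m+2)\<bar> \<le> C22 * (yy x)^(m+1) \<and>
      \<bar>real (m+3) * Th * (w Th V2 x)^(m+2) - 2 * (w Th V2 x)^(m+3) + 2 * (yy x)^(m+3)\<bar> \<le> C22 * (yy x)^(m+1)"
    using core_inst[OF Th0, of V2] by blast
  define C where "C = max 0 (max (max C11 C12) (max C21 C22))"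
  have C0: "C \<ge> 0" by (simp add: C_def)
  define K where "K = V2 - V1"
  define E where "E = (Tc + Th + 4) * (V1 + V2) * C"
  have E0: "E \<ge> 0" using C0 Tc0 Th0 V10 K0 by (simp add: E_def)
  define c0 where "c0 = 2*(Tc+Th)*E/(Th^2*K)"
  define X0 where "X0 = max (max x11 x12) (max x21 x22) + 2 * (2*E/(Th*K) + 1) / sqrt A"
  have X0pos: "X0 > 0" using x11 E0 Th0 K0 sA by (simp add: X0_def K_def add_pos_nonneg)
  have key: "\<bar>eta_nonregen D k Om Tc Th V1 V2 x - (1 - Tc / Th)\<bar> \<le> c0 / yy x \<and>
             \<bar>eta_regen D k Om Tc Th V1 V2 x - (1 - Tc / Th)\<bar> \<le> c0 / yy x" if x: "x \<ge> X0" for x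
  proof -
    have "2 * (2*E/(Th*K) + 1) / sqrt A \<ge> 0" using E0 Th0 K0 sA by (simp add: K_def)
    have xge: "x \<ge> x11" "x \<ge> x12" "x \<ge> x21" "x \<ge> x22" 
      using x \<open>2 * (2*E/(Th*K) + 1) / sqrt A \<ge> 0\<close> unfolding X0_def by linarith+
    have "x - max (max x11 x12) (max x21 x22) \<ge> 2 * (2*E/(Th*K) + 1) / sqrt A" using x unfolding X0_def by linarith
    moreover have "max (max x11 x12) (max x21 x22) > 0" using x11 by simp
    ultimately have "x \<ge> 2 * (2*E/(Th*K) + 1) / sqrt A" by linarith
    hence ybig: "yy x \<ge> 2*E/(Th*K) + 1" using sA by (simp add: yy_def field_simps)
    have "2*E/(Th*K) \<ge> 0" using E0 Th0 K0 by (simp add: K_def)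
    hence y1: "yy x \<ge> 1" using ybig by linarith
    define y where "y = yy x"
    define Y where "Y = y^(m+1)"
    have Y0: "Y > 0" using y1 by (simp add: Y_def y_def)
    have yn: "y^(m+2) = y*Y" "y^(m+3) = y*(y*Y)" by (simp_all add: Y_def eval_nat_numeral)
    note h11 = H11[OF xge(1)] and h12 = H12[OF xge(2)] and h21 = H21[OF xge(3)] and h22 = H22[OF xge(4)]
    note i11 = ident[OF Tc0 A_def B_def[of V1] conjunct1[OF H11[OF xge(1)]], folded w_def] 
    note i12 = ident[OF Tc0 A_def B_def[of V2] conjunct1[OF H12[OF xge(2)]], folded w_def] 
    note i21 = ident[OF Th0 A_def B_def[of V1] conjunct1[OF H21[OF xge(3)]], folded w_def] 
    note i22 = ident[OF Th0 A_def B_def[of V2] conjunct1[OF H22[OF xge(4)]], folded w_def] 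

    define p11 where "p11 = (w Tc V1 x)^(m+2)"
    define p12 where "p12 = (w Tc V2 x)^(m+2)"
    define p21 where "p21 = (w Th V1 x)^(m+2)"
    define p22 where "p22 = (w Th V2 x)^(m+2)"
    define q11 where "q11 = real (m+3) * Tc * (w Tc V1 x)^(m+2) - 2 * (w Tc V1 x)^(m+3)"
    define q12 where "q12 = real (m+3) * Tc * (w Tc V2 x)^(m+2) - 2 * (w Tc V2 x)^(m+3)"
    define q21 where "q21 = real (m+3) * Th * (w Th V1 x)^(m+2) - 2 * (w Th V1 x)^(m+3)"
    define q22 where "q22 = real (m+3) * Th * (w Th V2 x)^(m+2) - 2 * (w Th V2 x)^(m+3)"
    have CC: "C11 \<le> C" "C12 \<le> C" "C21 \<le> C" "C22 \<le> C" by (auto simp: C_def)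
    have Y0': "0 \<le> Y" using Y0 by simp
    have bp11: "\<bar>p11 - y*Y\<bar> \<le> C*Y" using h11 CC(1) Y0' unfolding p11_def yn(1)[symmetric] Y_def[symmetric] y_def[symmetric]
      by (meson mult_right_mono order_trans)
    have bp12: "\<bar>p12 - y*Y\<bar> \<le> C*Y" using h12 CC(2) Y0' unfolding p12_def yn(1)[symmetric] Y_def[symmetric] y_def[symmetric]
      by (meson mult_right_mono order_trans)
    have bp21: "\<bar>p21 - y*Y\<bar> \<le> C*Y" using h21 CC(3) Y0' unfolding p21_def yn(1)[symmetric] Y_def[symmetric] y_def[symmetric]
      by (meson mult_right_mono order_trans)
    have bp22: "\<bar>p22 - y*Y\<bar> \<le> C*Y" using h22 CC(4) Y0' unfolding p22_def yn(1)[symmetric] Y_def[symmetric] y_def[symmetric]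
      by (meson mult_right_mono order_trans)
    have bq11: "\<bar>q11 + 2*(y*(y*Y))\<bar> \<le> C*Y" using h11 CC(1) Y0' unfolding q11_def yn(2)[symmetric] Y_def[symmetric] y_def[symmetric]
      by (meson mult_right_mono order_trans)
    have bq12: "\<bar>q12 + 2*(y*(y*Y))\<bar> \<le> C*Y" using h12 CC(2) Y0' unfolding q12_def yn(2)[symmetric] Y_def[symmetric] y_def[symmetric]
      by (meson mult_right_mono order_trans)
    have bq21: "\<bar>q21 + 2*(y*(y*Y))\<bar> \<le> C*Y" using h21 CC(3) Y0' unfolding q21_def yn(2)[symmetric] Y_def[symmetric] y_def[symmetric]
      by (meson mult_right_mono order_trans)
    have bq22: "\<bar>q22 + 2*(y*(y*Y))\<bar> \<le> C*Y" using h22 CC(4) Y0' unfolding q22_def yn(2)[symmetric] Y_def[symmetric] y_def[symmetric]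
      by (meson mult_right_mono order_trans)
    define f where "f = (real (m+3) - 1) / real (m+3)"
    have f0: "0 \<le> f" "f \<le> 1" by (auto simp: f_def)
    define X1 where "X1 = q21 / real (m+1) - q11 / real (m+1)"
    define X2 where "X2 = q22 / real (m+1) - q12 / real (m+1)"
    have bX1: "\<bar>X1\<bar> \<le> 2*C*Y" unfolding X1_def by (rule q_bound[OF bq11 bq21])
    have bX2: "\<bar>X2\<bar> \<le> 2*C*Y" unfolding X2_def by (rule q_bound[OF bq12 bq22])
    have V20: "V2 > 0" using assms by simp
    define P where "P = Tc*(V2*p12 - V1*p11)"
    define Q where "Q = Th*(V2*p22 - V1*p21)"
    have bP: "\<bar>P - Tc*K*y*Y\<bar> \<le> Tc*(V1+V2)*C*Y"
      unfolding P_def K_def using lin_bound[OF bp11 bp12 Tc0 V10 V20] by simp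
    have bQ: "\<bar>Q - Th*K*y*Y\<bar> \<le> Th*(V1+V2)*C*Y"
      unfolding Q_def K_def using lin_bound[OF bp21 bp22 Th0 V10 V20] by simp
    have bR1: "\<bar>f*V1*X1\<bar> \<le> 2*V1*C*Y" by (rule fX_bound[OF f0 V10 bX1])
    have bR2: "\<bar>f*V2*X2\<bar> \<le> 2*V2*C*Y" by (rule fX_bound[OF f0 V20 bX2])
    have CY: "0 \<le> C*Y" using C0 Y0' by simp
    have EY1: "(Tc*(V1+V2) + 2*V2 + 2*V1)*(C*Y) \<le> E*Y"
    proof -
      have "Tc*(V1+V2) + 2*V2 + 2*V1 \<le> (Tc + Th + 4) * (V1 + V2)" using Th0 V10 V20
        by (simp add: algebra_simps)
      hence "(Tc*(V1+V2) + 2*V2 + 2*V1)*(C*Y) \<le> ((Tc + Th + 4) * (V1 + V2))*(C*Y)"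
        using CY by (rule mult_right_mono)
      thus ?thesis by (simp add: E_def algebra_simps)
    qed
    have EY2: "(Th*(V1+V2) + 2*V1)*(C*Y) \<le> E*Y"
    proof -
      have "Th*(V1+V2) + 2*V1 \<le> (Tc + Th + 4) * (V1 + V2)" using Tc0 V10 V20
        by (simp add: algebra_simps)
      hence "(Th*(V1+V2) + 2*V1)*(C*Y) \<le> ((Tc + Th + 4) * (V1 + V2))*(C*Y)"
        using CY by (rule mult_right_mono)
      thus ?thesis by (simp add: E_def algebra_simps)
    qed
    have EY3: "Th*(V1+V2)*C*Y \<le> E*Y"
    proof -
      have "Th*(V1+V2) \<le> (Tc + Th + 4) * (V1 + V2)" using Tc0 V10 V20
        by (simp add: algebra_simps)
      hence "(Th*(V1+V2))*(C*Y) \<le> ((Tc + Th + 4) * (V1 + V2))*(C*Y)"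
        using CY by (rule mult_right_mono)
      thus ?thesis by (simp add: E_def algebra_simps)
    qed
    have dist: "\<And>T a b :: real. T * (V2*a - V1*b) = V2*(T*a) - V1*(T*b)" by (simp add: algebra_simps)
    have eta1: "eta_nonregen D k Om Tc Th V1 V2 x = 1 - (P + f*V2*X2)/(Q + f*V1*X1)"
    proof -
      have a: "Tc^(m+3) * (V2 * xi (m+3) k Om Tc V2 x - V1 * xi (m+3) k Om Tc V1 x) = P"
        "Th^(m+3) * (V2 * xi (m+3) k Om Th V2 x - V1 * xi (m+3) k Om Th V1 x) = Q"
        unfolding dist i11(1) i12(1) i21(1) i22(1) P_def Q_def p11_def p12_def p21_def p22_def
        by (simp_all add: algebra_simps)
      have b: "Th^(m+3) * chi (m+3) k Om Th V2 x - Tc^(m+3) * chi (m+3) k Om Tc V2 x = X2"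
        "Th^(m+3) * chi (m+3) k Om Th V1 x - Tc^(m+3) * chi (m+3) k Om Tc V1 x = X1"
        unfolding X1_def X2_def q11_def q12_def q21_def q22_def i11(2) i12(2) i21(2) i22(2) by simp_all
      show ?thesis unfolding eta_nonregen_def Let_def D a b f_def by (simp add: mult.assoc)
    qed
    have eta2: "eta_regen D k Om Tc Th V1 V2 x = 1 - (P + f*V2*X2 - f*V1*X1)/Q"
    proof -
      have a: "Tc^(m+3) * (V2 * xi (m+3) k Om Tc V2 x - V1 * xi (m+3) k Om Tc V1 x) = P"
        "Th^(m+3) * (V2 * xi (m+3) k Om Th V2 x - V1 * xi (m+3) k Om Th V1 x) = Q"
        unfolding dist i11(1) i12(1) i21(1) i22(1) P_def Q_def p11_def p12_def p21_def p22_def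
        by (simp_all add: algebra_simps)
      have b: "Th^(m+3) * chi (m+3) k Om Th V2 x - Tc^(m+3) * chi (m+3) k Om Tc V2 x = X2"
        "Th^(m+3) * chi (m+3) k Om Th V1 x - Tc^(m+3) * chi (m+3) k Om Tc V1 x = X1"
        unfolding X1_def X2_def q11_def q12_def q21_def q22_def i11(2) i12(2) i21(2) i22(2) by simp_all
      show ?thesis unfolding eta_regen_def Let_def D a b f_def[symmetric] by (simp add: algebra_simps)
    qed
    have y0: "y > 0" using y1 by (simp add: y_def)
    have ybig': "y \<ge> 2*E/(Th*K)" using ybig by (simp add: y_def)
    have K0': "K > 0" using K0 by (simp add: K_def)
    have N1: "\<bar>(P + f*V2*X2) - Tc*K*y*Y\<bar> \<le> E*Y"
    proof -
      have "(P + f*V2*X2) - Tc*K*y*Y = (P - Tc*K*y*Y) + f*V2*X2" by simp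
      hence t: "\<bar>(P + f*V2*X2) - Tc*K*y*Y\<bar> \<le> \<bar>P - Tc*K*y*Y\<bar> + \<bar>f*V2*X2\<bar>" by (metis abs_triangle_ineq)
      have e: "Tc*(V1+V2)*C*Y + 2*V2*C*Y + 2*V1*C*Y \<le> E*Y" using EY1 by (simp add: algebra_simps)
      have z: "0 \<le> 2*V1*C*Y" using V10 C0 Y0' by simp
      have "\<bar>(P + f*V2*X2) - Tc*K*y*Y\<bar> \<le> Tc*(V1+V2)*C*Y + 2*V2*C*Y"
        by (rule order_trans[OF t]) (intro add_mono bP bR2)
      thus ?thesis using e z by linarith
    qed
    have M1: "\<bar>(Q + f*V1*X1) - Th*K*y*Y\<bar> \<le> E*Y"
    proof -
      have "(Q + f*V1*X1) - Th*K*y*Y = (Q - Th*K*y*Y) + f*V1*X1" by simp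
      hence t: "\<bar>(Q + f*V1*X1) - Th*K*y*Y\<bar> \<le> \<bar>Q - Th*K*y*Y\<bar> + \<bar>f*V1*X1\<bar>" by (metis abs_triangle_ineq)
      have e: "Th*(V1+V2)*C*Y + 2*V1*C*Y \<le> E*Y" using EY2 by (simp add: algebra_simps)
      have "\<bar>(Q + f*V1*X1) - Th*K*y*Y\<bar> \<le> Th*(V1+V2)*C*Y + 2*V1*C*Y"
        by (rule order_trans[OF t]) (intro add_mono bQ bR1)
      thus ?thesis using e by linarith
    qed
    have N2: "\<bar>(P + f*V2*X2 - f*V1*X1) - Tc*K*y*Y\<bar> \<le> E*Y"
    proof -
      have eqn: "(P + f*V2*X2 - f*V1*X1) - Tc*K*y*Y = ((P - Tc*K*y*Y) + f*V2*X2) - f*V1*X1" by simp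
      have t: "\<bar>(P + f*V2*X2 - f*V1*X1) - Tc*K*y*Y\<bar> \<le> \<bar>P - Tc*K*y*Y\<bar> + \<bar>f*V2*X2\<bar> + \<bar>f*V1*X1\<bar>"
        unfolding eqn by (rule order_trans[OF abs_triangle_ineq4 add_right_mono[OF abs_triangle_ineq]])
      have e: "Tc*(V1+V2)*C*Y + 2*V2*C*Y + 2*V1*C*Y \<le> E*Y" using EY1 by (simp add: algebra_simps)
      have "\<bar>(P + f*V2*X2 - f*V1*X1) - Tc*K*y*Y\<bar> \<le> Tc*(V1+V2)*C*Y + 2*V2*C*Y + 2*V1*C*Y"
        by (rule order_trans[OF t]) (intro add_mono bP bR1 bR2)
      thus ?thesis using e by linarith
    qed
    have M2: "\<bar>Q - Th*K*y*Y\<bar> \<le> E*Y" using bQ EY3 by linarith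
    note r1 = ratio[OF Tc0 Th0 K0' Y0 E0 ybig' y0 N1 M1]
    note r2 = ratio[OF Tc0 Th0 K0' Y0 E0 ybig' y0 N2 M2]
    show ?thesis unfolding eta1 eta2 using r1 r2 by (simp add: c0_def y_def)

  qed

  define cc where "cc = 2*c0/sqrt A"
  have ev: "eventually (\<lambda>x. \<bar>eta_nonregen D k Om Tc Th V1 V2 x - (1 - Tc / Th)\<bar> \<le> cc * \<bar>1/x\<bar> \<and>
      \<bar>eta_regen D k Om Tc Th V1 V2 x - (1 - Tc / Th)\<bar> \<le> cc * \<bar>1/x\<bar>) at_top"
    using eventually_ge_at_top[of X0]
  proof eventually_elim
    case (elim x)
    have x0: "x > 0" using elim X0pos by linarith
    have "c0 / yy x = cc * \<bar>1/x\<bar>" using x0 sA by (simp add: yy_def cc_def field_simps)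
    thus ?case using key[OF elim] by simp
  qed
  have ev1: "eventually (\<lambda>x. norm (eta_nonregen D k Om Tc Th V1 V2 x - (1 - Tc / Th)) \<le> cc * norm (1/x)) at_top"
    using ev by eventually_elim (simp add: real_norm_def)
  have ev2: "eventually (\<lambda>x. norm (eta_regen D k Om Tc Th V1 V2 x - (1 - Tc / Th)) \<le> cc * norm (1/x)) at_top"
    using ev by eventually_elim (simp add: real_norm_def)
  have lim0: "((\<lambda>x::real. cc * norm (1/x)) \<longlongrightarrow> 0) at_top"
  proof -
    have "((\<lambda>x::real. 1 / x) \<longlongrightarrow> 0) at_top"
      by (rule tendsto_divide_0[OF tendsto_const filterlim_at_top_imp_at_infinity[OF filterlim_ident]])
    hence "((\<lambda>x::real. norm (1 / x)) \<longlongrightarrow> norm (0::real)) at_top" by (rule tendsto_norm)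
    hence "((\<lambda>x::real. cc * norm (1 / x)) \<longlongrightarrow> cc * 0) at_top" by (intro tendsto_mult tendsto_const) simp
    thus ?thesis by simp
  qed
  have t1: "((\<lambda>x. eta_nonregen D k Om Tc Th V1 V2 x) \<longlongrightarrow> 1 - Tc / Th) at_top"
    using Lim_null_comparison[OF ev1 lim0] by (simp add: LIM_zero_iff)
  have t2: "((\<lambda>x. eta_regen D k Om Tc Th V1 V2 x) \<longlongrightarrow> 1 - Tc / Th) at_top"
    using Lim_null_comparison[OF ev2 lim0] by (simp add: LIM_zero_iff)
  show ?thesis using bigoI[OF ev1] bigoI[OF ev2] t1 t2 by blast
qed


end
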